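(* Let $(V,g)$ be a real vector space of dimension $n\ge3$ with non-degenerate scalar product $g$. Let $R\in\mathfrak{r}(V)$ be orthogonal to $\mathfrak{a}(V)\oplus\mathfrak{s}(V)$ and suppose $Ric(R)\neq0$. Then $Ric(R)$ is skew-symmetric and $3\,Ric(R)=Ric^*(R)$.
   Context: $\mathfrak{r}(V)$ is the space of $(0,4)$-tensors $R$ with $R(x,y,z,w)=-R(y,x,z,w)$ and $R(x,y,z,w)+R(y,z,x,w)+R(z,x,y,w)=0$; $\mathfrak{a}(V)$, resp. $\mathfrak{s}(V)$, is the subspace of those $R\in\mathfrak{r}(V)$ that are skew-symmetric, resp. symmetric, in the last two arguments. Orthogonality is with respect to the inner product on $(0,4)$-tensors induced by $g$, $\langle R,S\rangle=g^{ia}g^{jb}g^{kc}g^{ld}R_{ijkl}S_{abcd}$. $R^*(x,y,z,w):=-R(x,y,w,z)$, $Ric(R)(x,y):=g^{ij}R(e_i,x,y,e_j)$, $Ric^*(R):=Ric(R^* )$, where $(g^{ij})$ is the inverse of $g_{ij}=g(e_i,e_j)$ for a basis $\{e_i\}$. *)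

theory Defs
  imports "HOL-Analysis.Analysis"
begin

text \<open>V is modelled as real ^ 'n with its standard basis e_i (index type 'n, dim = CARD('n)).
  A (0,4)-tensor is given by its components R i j k l = R(e_i,e_j,e_k,e_l);
  a (0,2)-tensor by components. The scalar product g is given by its Gram matrix
  g $ i $ j = g(e_i,e_j), symmetric and invertible (non-degenerate, any signature).\<close>

type_synonym 'n tensor4 = "'n \<Rightarrow> 'n \<Rightarrow> 'n \<Rightarrow> 'n \<Rightarrow> real"
type_synonym 'n tensor2 = "'n \<Rightarrow> 'n \<Rightarrow> real"

definition nondeg_scalar_product :: "real^'n^'n \<Rightarrow> bool" where
  "nondeg_scalar_product g \<longleftrightarrow> transpose g = g \<and> invertible g"

definition ginv :: "real^'n^'n \<Rightarrow> real^'n^'n" where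
  "ginv g = matrix_inv g"

definition curv_r :: "('n::finite) tensor4 set" where
  "curv_r = {R. (\<forall>x y z w. R x y z w = - R y x z w) \<and>
                (\<forall>x y z w. R x y z w + R y z x w + R z x y w = 0)}"

definition curv_a :: "('n::finite) tensor4 set" where
  "curv_a = {R \<in> curv_r. \<forall>x y z w. R x y z w = - R x y w z}"

definition curv_s :: "('n::finite) tensor4 set" where
  "curv_s = {R \<in> curv_r. \<forall>x y z w. R x y z w = R x y w z}"

definition inner4 :: "real^'n^'n \<Rightarrow> ('n::finite) tensor4 \<Rightarrow> 'n tensor4 \<Rightarrow> real" where
  "inner4 g R S = (\<Sum>i\<in>UNIV. \<Sum>j\<in>UNIV. \<Sum>k\<in>UNIV. \<Sum>l\<in>UNIV.
     \<Sum>a\<in>UNIV. \<Sum>b\<in>UNIV. \<Sum>c\<in>UNIV. \<Sum>d\<in>UNIV.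
       ginv g $ i $ a * ginv g $ j $ b * ginv g $ k $ c * ginv g $ l $ d
       * R i j k l * S a b c d)"

definition star4 :: "'n tensor4 \<Rightarrow> 'n tensor4" where
  "star4 R = (\<lambda>x y z w. - R x y w z)"

definition Ric :: "real^'n^'n \<Rightarrow> ('n::finite) tensor4 \<Rightarrow> 'n tensor2" where
  "Ric g R = (\<lambda>x y. \<Sum>i\<in>UNIV. \<Sum>j\<in>UNIV. ginv g $ i $ j * R i x y j)"

definition RicStar :: "real^'n^'n \<Rightarrow> ('n::finite) tensor4 \<Rightarrow> 'n tensor2" where
  "RicStar g R = Ric g (star4 R)"

end

theory Submission
  imports Defs
begin


definition l1 :: "real^'n^'n \<Rightarrow> ('n::finite) tensor4 \<Rightarrow> 'n tensor4" where
  "l1 A T = (\<lambda>a b c d. \<Sum>p\<in>UNIV. A$a$p * T p b c d)"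
definition l2 :: "real^'n^'n \<Rightarrow> ('n::finite) tensor4 \<Rightarrow> 'n tensor4" where
  "l2 A T = (\<lambda>a b c d. \<Sum>p\<in>UNIV. A$b$p * T a p c d)"
definition l3 :: "real^'n^'n \<Rightarrow> ('n::finite) tensor4 \<Rightarrow> 'n tensor4" where
  "l3 A T = (\<lambda>a b c d. \<Sum>p\<in>UNIV. A$c$p * T a b p d)"
definition l4 :: "real^'n^'n \<Rightarrow> ('n::finite) tensor4 \<Rightarrow> 'n tensor4" where
  "l4 A T = (\<lambda>a b c d. \<Sum>p\<in>UNIV. A$d$p * T a b c p)"

lemma c12: "l2 B (l1 A T) = l1 A (l2 B T)"
  by (auto simp: l1_def l2_def fun_eq_iff sum_distrib_left mult_ac intro: sum.swap)
lemma c13: "l3 B (l1 A T) = l1 A (l3 B T)"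
  by (auto simp: l1_def l3_def fun_eq_iff sum_distrib_left mult_ac intro: sum.swap)
lemma c14: "l4 B (l1 A T) = l1 A (l4 B T)"
  by (auto simp: l1_def l4_def fun_eq_iff sum_distrib_left mult_ac intro: sum.swap)
lemma c23: "l3 B (l2 A T) = l2 A (l3 B T)"
  by (auto simp: l2_def l3_def fun_eq_iff sum_distrib_left mult_ac intro: sum.swap)
lemma c24: "l4 B (l2 A T) = l2 A (l4 B T)"
  by (auto simp: l2_def l4_def fun_eq_iff sum_distrib_left mult_ac intro: sum.swap)
lemma c34: "l4 B (l3 A T) = l3 A (l4 B T)"
  by (auto simp: l3_def l4_def fun_eq_iff sum_distrib_left mult_ac intro: sum.swap)

lemma m1: "l1 A (l1 B T) = l1 (A ** B) T"
  by (auto simp: l1_def matrix_matrix_mult_def fun_eq_iff sum_distrib_left sum_distrib_right mult_ac intro: sum.swap)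
lemma m2: "l2 A (l2 B T) = l2 (A ** B) T"
  by (auto simp: l2_def matrix_matrix_mult_def fun_eq_iff sum_distrib_left sum_distrib_right mult_ac intro: sum.swap)
lemma m3: "l3 A (l3 B T) = l3 (A ** B) T"
  by (auto simp: l3_def matrix_matrix_mult_def fun_eq_iff sum_distrib_left sum_distrib_right mult_ac intro: sum.swap)
lemma m4: "l4 A (l4 B T) = l4 (A ** B) T"
  by (auto simp: l4_def matrix_matrix_mult_def fun_eq_iff sum_distrib_left sum_distrib_right mult_ac intro: sum.swap)

lemma dl[simp]: "(\<Sum>p\<in>UNIV. (if (x::'n::finite) = p then 1 else 0) * f p) = (f x::real)"
proof -
  have "(\<Sum>p\<in>UNIV. (if x = p then 1 else 0) * f p) = (\<Sum>p\<in>UNIV. if x = p then f p else 0)"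
    by (rule sum.cong) auto
  also have "\<dots> = f x" by simp
  finally show ?thesis .
qed
lemma i1: "l1 (mat 1) T = T" by (simp add: l1_def mat_def fun_eq_iff)
lemma i2: "l2 (mat 1) T = T" by (simp add: l2_def mat_def fun_eq_iff)
lemma i3: "l3 (mat 1) T = T" by (simp add: l3_def mat_def fun_eq_iff)
lemma i4: "l4 (mat 1) T = T" by (simp add: l4_def mat_def fun_eq_iff)

lemma inner_up: "inner4 g R T = (\<Sum>i\<in>UNIV. \<Sum>j\<in>UNIV. \<Sum>k\<in>UNIV. \<Sum>l\<in>UNIV. R i j k l *
   l1 (ginv g) (l2 (ginv g) (l3 (ginv g) (l4 (ginv g) T))) i j k l)"
  by (simp add: inner4_def l1_def l2_def l3_def l4_def sum_distrib_left mult_ac)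


lemma ifm1[simp]: "(if P then 1 else 0) * (a::real) = (if P then a else 0)" by simp
lemma ifm2[simp]: "(a::real) * (if P then 1 else 0) = (if P then a else 0)" by simp
lemma ifm3[simp]: "(if P then b else 0) * (a::real) = (if P then b * a else 0)" by simp
lemma ifm4[simp]: "(a::real) * (if P then b else 0) = (if P then a * b else 0)" by simp
lemma sif[simp]: "(\<Sum>l\<in>A. if P then f l else (0::real)) = (if P then sum f A else 0)" by simp



definition sw12 :: "('n::finite) tensor4 \<Rightarrow> 'n tensor4" where "sw12 T = (\<lambda>a b c d. T b a c d)"
definition sw34 :: "('n::finite) tensor4 \<Rightarrow> 'n tensor4" where "sw34 T = (\<lambda>a b c d. T a b d c)"
definition cyc :: "('n::finite) tensor4 \<Rightarrow> 'n tensor4" where "cyc T = (\<lambda>a b c d. T b c a d)"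

lemma p12: "l1 A (sw12 T) = sw12 (l2 A T)" "l2 A (sw12 T) = sw12 (l1 A T)"
  "l3 A (sw12 T) = sw12 (l3 A T)" "l4 A (sw12 T) = sw12 (l4 A T)"
  by (simp_all add: l1_def l2_def l3_def l4_def sw12_def)
lemma p34: "l1 A (sw34 T) = sw34 (l1 A T)" "l2 A (sw34 T) = sw34 (l2 A T)"
  "l3 A (sw34 T) = sw34 (l4 A T)" "l4 A (sw34 T) = sw34 (l3 A T)"
  by (simp_all add: l1_def l2_def l3_def l4_def sw34_def)
lemma pc: "l1 A (cyc T) = cyc (l3 A T)" "l2 A (cyc T) = cyc (l1 A T)"
  "l3 A (cyc T) = cyc (l2 A T)" "l4 A (cyc T) = cyc (l4 A T)"
  by (simp_all add: l1_def l2_def l3_def l4_def cyc_def)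

lemma lin: 
  "l1 A (\<lambda>a b c d. T a b c d + S a b c d) = (\<lambda>a b c d. l1 A T a b c d + l1 A S a b c d)"
  "l2 A (\<lambda>a b c d. T a b c d + S a b c d) = (\<lambda>a b c d. l2 A T a b c d + l2 A S a b c d)"
  "l3 A (\<lambda>a b c d. T a b c d + S a b c d) = (\<lambda>a b c d. l3 A T a b c d + l3 A S a b c d)"
  "l4 A (\<lambda>a b c d. T a b c d + S a b c d) = (\<lambda>a b c d. l4 A T a b c d + l4 A S a b c d)"
  "l1 A (\<lambda>a b c d. - T a b c d) = (\<lambda>a b c d. - l1 A T a b c d)"
  "l2 A (\<lambda>a b c d. - T a b c d) = (\<lambda>a b c d. - l2 A T a b c d)"
  "l3 A (\<lambda>a b c d. - T a b c d) = (\<lambda>a b c d. - l3 A T a b c d)"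
  "l4 A (\<lambda>a b c d. - T a b c d) = (\<lambda>a b c d. - l4 A T a b c d)"
  "l1 A (\<lambda>a b c d. 0) = (\<lambda>a b c d. 0)"
  "l2 A (\<lambda>a b c d. 0) = (\<lambda>a b c d. 0)"
  "l3 A (\<lambda>a b c d. 0) = (\<lambda>a b c d. 0)"
  "l4 A (\<lambda>a b c d. 0) = (\<lambda>a b c d. 0)"
  by (simp_all add: l1_def l2_def l3_def l4_def algebra_simps sum.distrib sum_negf)

definition low :: "real^'n^'n \<Rightarrow> ('n::finite) tensor4 \<Rightarrow> 'n tensor4" where
  "low g U = l1 g (l2 g (l3 g (l4 g U)))"

lemmas cs = c12 c13 c14 c23 c24 c34

lemma low_sw12: "low g (sw12 U) = sw12 (low g U)"
  by (simp add: low_def p12 cs)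
lemma low_sw34: "low g (sw34 U) = sw34 (low g U)"
  by (simp add: low_def p34 cs)
lemma low_cyc: "low g (cyc U) = cyc (low g U)"
  by (simp add: low_def pc cs)
lemma low_add: "low g (\<lambda>a b c d. T a b c d + S a b c d) = (\<lambda>a b c d. low g T a b c d + low g S a b c d)"
  by (simp add: low_def lin)
lemma low_neg: "low g (\<lambda>a b c d. - T a b c d) = (\<lambda>a b c d. - low g T a b c d)"
  by (simp add: low_def lin)
lemma low_0: "low g (\<lambda>a b c d. 0) = (\<lambda>a b c d. 0)"
  by (simp add: low_def lin)

lemma low_skew12:
  assumes "\<forall>x y z w. U x y z w = - U y x z w"
  shows "\<forall>x y z w. low g U x y z w = - low g U y x z w"
proof -
  have "sw12 U = (\<lambda>a b c d. - U a b c d)" using assms unfolding sw12_def fun_eq_iff by blast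
  then have "sw12 (low g U) = (\<lambda>a b c d. - low g U a b c d)"
    by (metis low_sw12 low_neg)
  then show ?thesis unfolding sw12_def fun_eq_iff by blast
qed

lemma low_skew34:
  assumes "\<forall>x y z w. U x y z w = - U x y w z"
  shows "\<forall>x y z w. low g U x y z w = - low g U x y w z"
proof -
  have "sw34 U = (\<lambda>a b c d. - U a b c d)" using assms unfolding sw34_def fun_eq_iff by blast
  then have "sw34 (low g U) = (\<lambda>a b c d. - low g U a b c d)"
    by (metis low_sw34 low_neg)
  then show ?thesis unfolding sw34_def fun_eq_iff by blast
qed

lemma low_sym34:
  assumes "\<forall>x y z w. U x y z w = U x y w z"
  shows "\<forall>x y z w. low g U x y z w = low g U x y w z"
proof -
  have "sw34 U = U" using assms unfolding sw34_def fun_eq_iff by blast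
  then have "sw34 (low g U) = low g U"
    by (metis low_sw34)
  then show ?thesis unfolding sw34_def fun_eq_iff by blast
qed

lemma low_bianchi:
  assumes "\<forall>x y z w. U x y z w + U y z x w + U z x y w = 0"
  shows "\<forall>x y z w. low g U x y z w + low g U y z x w + low g U z x y w = 0"
proof -
  have "(\<lambda>a b c d. (\<lambda>a b c d. U a b c d + cyc U a b c d) a b c d + cyc (cyc U) a b c d) = (\<lambda>a b c d. 0)"
    using assms unfolding cyc_def fun_eq_iff by blast
  then have "low g (\<lambda>a b c d. (\<lambda>a b c d. U a b c d + cyc U a b c d) a b c d + cyc (cyc U) a b c d) = (\<lambda>a b c d. 0)"
    by (simp add: low_0)
  then have "(\<lambda>a b c d. low g U a b c d + cyc (low g U) a b c d + cyc (cyc (low g U)) a b c d) = (\<lambda>a b c d. 0)"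
    by (simp add: low_add low_cyc)
  note h = this
  show ?thesis
  proof (intro allI)
    fix x y z w
    show "low g U x y z w + low g U y z x w + low g U z x y w = 0"
      using fun_cong[OF fun_cong[OF fun_cong[OF fun_cong[OF h, of x], of y], of z], of w]
      unfolding cyc_def by (simp only:)
  qed
qed

lemma low_r: "U \<in> curv_r \<Longrightarrow> low g U \<in> curv_r"
  unfolding curv_r_def using low_skew12[of U g] low_bianchi[of U g] by blast
lemma low_a: "U \<in> curv_a \<Longrightarrow> low g U \<in> curv_a"
  unfolding curv_a_def using low_r[of U g] low_skew34[of U g] by blast
lemma low_s: "U \<in> curv_s \<Longrightarrow> low g U \<in> curv_s"
  unfolding curv_s_def using low_r[of U g] low_sym34[of U g] by blast

lemma up_low: assumes "M ** g = mat 1"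
  shows "l1 M (l2 M (l3 M (l4 M (low g U)))) = U"
  by (simp add: low_def cs m1 m2 m3 m4 assms i1 i2 i3 i4)



definition dd :: "'n \<Rightarrow> 'n \<Rightarrow> real" where "dd x p = (if x = p then 1 else 0)"

context fixes R :: "('n::finite) tensor4" and M :: "real^'n^'n" begin
lemma P1: "(\<Sum>i\<in>UNIV. \<Sum>j\<in>UNIV. \<Sum>k\<in>UNIV. \<Sum>l\<in>UNIV. R i j k l * (M$i$k * (dd x j * dd y l)))
   = (\<Sum>i\<in>UNIV. \<Sum>k\<in>UNIV. M$i$k * R i x k y)"
  by (simp add: dd_def mult_ac cong: if_cong)
lemma P2: "(\<Sum>i\<in>UNIV. \<Sum>j\<in>UNIV. \<Sum>k\<in>UNIV. \<Sum>l\<in>UNIV. R i j k l * (M$i$l * (dd x j * dd y k)))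
   = (\<Sum>i\<in>UNIV. \<Sum>l\<in>UNIV. M$i$l * R i x y l)"
  by (simp add: dd_def mult_ac cong: if_cong)
lemma P3: "(\<Sum>i\<in>UNIV. \<Sum>j\<in>UNIV. \<Sum>k\<in>UNIV. \<Sum>l\<in>UNIV. R i j k l * (M$j$k * (dd x i * dd y l)))
   = (\<Sum>j\<in>UNIV. \<Sum>k\<in>UNIV. M$j$k * R x j k y)"
  by (simp add: dd_def mult_ac cong: if_cong)
lemma P4: "(\<Sum>i\<in>UNIV. \<Sum>j\<in>UNIV. \<Sum>k\<in>UNIV. \<Sum>l\<in>UNIV. R i j k l * (M$j$l * (dd x i * dd y k)))
   = (\<Sum>j\<in>UNIV. \<Sum>l\<in>UNIV. M$j$l * R x j y l)"
  by (simp add: dd_def mult_ac cong: if_cong)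
lemma P5: "(\<Sum>i\<in>UNIV. \<Sum>j\<in>UNIV. \<Sum>k\<in>UNIV. \<Sum>l\<in>UNIV. R i j k l * (M$k$l * (dd x i * dd y j)))
   = (\<Sum>k\<in>UNIV. \<Sum>l\<in>UNIV. M$k$l * R x y k l)"
  by (simp add: dd_def mult_ac cong: if_cong)
end


definition US :: "real^'n^'n \<Rightarrow> 'n \<Rightarrow> 'n \<Rightarrow> ('n::finite) tensor4" where
  "US M x y = (\<lambda>i j k l. M$i$k * (dd x j * dd y l) + M$i$l * (dd x j * dd y k)
      - M$j$k * (dd x i * dd y l) - M$j$l * (dd x i * dd y k)
      - M$k$l * (dd x i * dd y j) + M$k$l * (dd y i * dd x j))"

definition UA :: "real^'n^'n \<Rightarrow> 'n \<Rightarrow> 'n \<Rightarrow> ('n::finite) tensor4" where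
  "UA M x y = (\<lambda>i j k l. M$i$l * (dd x j * dd y k) + M$i$l * (dd y j * dd x k)
      + M$j$k * (dd x i * dd y l) + M$j$k * (dd y i * dd x l)
      - M$i$k * (dd x j * dd y l) - M$i$k * (dd y j * dd x l)
      - M$j$l * (dd x i * dd y k) - M$j$l * (dd y i * dd x k))"

lemma US_s: assumes sym: "\<And>i j. M$i$j = M$j$i" shows "US M x y \<in> curv_s"
proof -
  have "\<And>i j. M$i$j = M$j$i" by (rule sym)
  show ?thesis unfolding curv_s_def curv_r_def US_def
    by (auto simp: algebra_simps sym[of _ i for i])
qed

lemma UA_a: assumes sym: "\<And>i j. M$i$j = M$j$i" shows "UA M x y \<in> curv_a"
  unfolding curv_a_def curv_r_def UA_def
    by (auto simp: algebra_simps sym[of _ i for i])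

definition CC :: "('n::finite) tensor4 \<Rightarrow> 'n tensor4 \<Rightarrow> real" where
  "CC R U = (\<Sum>i\<in>UNIV. \<Sum>j\<in>UNIV. \<Sum>k\<in>UNIV. \<Sum>l\<in>UNIV. R i j k l * U i j k l)"

lemma CC_US: "CC R (US M x y) =
   (\<Sum>i\<in>UNIV. \<Sum>k\<in>UNIV. M$i$k * R i x k y) + (\<Sum>i\<in>UNIV. \<Sum>l\<in>UNIV. M$i$l * R i x y l)
   - (\<Sum>j\<in>UNIV. \<Sum>k\<in>UNIV. M$j$k * R x j k y) - (\<Sum>j\<in>UNIV. \<Sum>l\<in>UNIV. M$j$l * R x j y l)
   - (\<Sum>k\<in>UNIV. \<Sum>l\<in>UNIV. M$k$l * R x y k l) + (\<Sum>k\<in>UNIV. \<Sum>l\<in>UNIV. M$k$l * R y x k l)"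
  unfolding CC_def US_def
  by (simp only: ring_distribs sum.distrib sum_subtractf P1 P2 P3 P4 P5)

lemma CC_UA: "CC R (UA M x y) =
   (\<Sum>i\<in>UNIV. \<Sum>l\<in>UNIV. M$i$l * R i x y l) + (\<Sum>i\<in>UNIV. \<Sum>l\<in>UNIV. M$i$l * R i y x l)
   + (\<Sum>j\<in>UNIV. \<Sum>k\<in>UNIV. M$j$k * R x j k y) + (\<Sum>j\<in>UNIV. \<Sum>k\<in>UNIV. M$j$k * R y j k x)
   - (\<Sum>i\<in>UNIV. \<Sum>k\<in>UNIV. M$i$k * R i x k y) - (\<Sum>i\<in>UNIV. \<Sum>k\<in>UNIV. M$i$k * R i y k x)
   - (\<Sum>j\<in>UNIV. \<Sum>l\<in>UNIV. M$j$l * R x j y l) - (\<Sum>j\<in>UNIV. \<Sum>l\<in>UNIV. M$j$l * R y j x l)"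
  unfolding CC_def UA_def
  by (simp only: ring_distribs sum.distrib sum_subtractf P1 P2 P3 P4 P5)



lemma inv_props: assumes "invertible (g::real^'n::finite^'n)"
  shows "g ** matrix_inv g = mat 1 \<and> matrix_inv g ** g = mat 1"
  using assms unfolding matrix_inv_def invertible_def by (rule someI_ex)

lemma inner_CC: "inner4 g R T = CC R (l1 (ginv g) (l2 (ginv g) (l3 (ginv g) (l4 (ginv g) T))))"
  by (simp add: inner_up CC_def)

theorem lemma5p3:
  fixes g :: "real^'n^'n" and R :: "('n::finite) tensor4"
  assumes "CARD('n) \<ge> 3"
    and "nondeg_scalar_product g"
    and "R \<in> curv_r"
    and "\<forall>A\<in>curv_a. \<forall>S\<in>curv_s. inner4 g R (\<lambda>x y z w. A x y z w + S x y z w) = 0"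
    and "Ric g R \<noteq> (\<lambda>x y. 0)"
  shows "(\<forall>x y. Ric g R x y = - Ric g R y x) \<and>
         (\<forall>x y. 3 * Ric g R x y = RicStar g R x y)"
proof -
  define M where "M = ginv g"
  have gt: "transpose g = g" and gi: "invertible g" using assms(2) by (auto simp: nondeg_scalar_product_def)
  have Mg: "M ** g = mat 1" and gM: "g ** M = mat 1"
    using inv_props[OF gi] by (auto simp: M_def ginv_def)
  have "transpose M ** g = mat 1"
    by (metis gM gt matrix_transpose_mul transpose_mat)
  then have tM: "transpose M = M"
    by (metis gM matrix_mul_assoc matrix_mul_lid matrix_mul_rid)
  have Msym: "\<And>i j. M$i$j = M$j$i"
    by (metis tM transpose_def vec_lambda_beta)
  have skew: "\<And>x y z w. R x y z w = - R y x z w" and bian: "\<And>x y z w. R x y z w + R y z x w + R z x y w = 0"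
    using assms(3) unfolding curv_r_def by blast+
  have z_a: "(\<lambda>x y z w. 0) \<in> (curv_a :: 'n tensor4 set)" by (simp add: curv_a_def curv_r_def)
  have z_s: "(\<lambda>x y z w. 0) \<in> (curv_s :: 'n tensor4 set)" by (simp add: curv_s_def curv_r_def)
  have orth: "CC R U = 0" if "U \<in> curv_a \<or> U \<in> curv_s" for U
  proof -
    have "inner4 g R (low g U) = 0"
    proof (cases "U \<in> curv_a")
      case True
      then have "low g U \<in> curv_a" by (rule low_a)
      from assms(4)[rule_format, OF this z_s] show ?thesis by simp
    next
      case False
      then have "low g U \<in> curv_s" using that low_s by blast
      from assms(4)[rule_format, OF z_a this] show ?thesis by simp
    qed
    then show ?thesis unfolding inner_CC M_def[symmetric] using up_low[OF Mg] by simp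
  qed
  have RicE: "Ric g R x y = (\<Sum>i\<in>UNIV. \<Sum>l\<in>UNIV. M$i$l * R i x y l)" for x y
    by (simp add: Ric_def M_def)
  have RSE: "RicStar g R x y = - (\<Sum>i\<in>UNIV. \<Sum>k\<in>UNIV. M$i$k * R i x k y)" for x y
    by (simp add: RicStar_def Ric_def star4_def M_def sum_negf)
  have e3: "(\<Sum>j\<in>UNIV. \<Sum>k\<in>UNIV. M$j$k * R x j k y) = RicStar g R x y" for x y
    unfolding RSE by (simp add: sum_negf skew[of x])
  have e4: "(\<Sum>j\<in>UNIV. \<Sum>l\<in>UNIV. M$j$l * R x j y l) = - Ric g R x y" for x y
    unfolding RicE by (simp add: sum_negf skew[of x])
  have e5: "(\<Sum>k\<in>UNIV. \<Sum>l\<in>UNIV. M$k$l * R x y k l) = Ric g R y x - Ric g R x y" for x y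
  proof -
    have "R x y k l = R k y x l - R k x y l" for k l
      using bian[of x y k l] skew[of y k x l] skew[of k x y l] by linarith
    then have "(\<Sum>k\<in>UNIV. \<Sum>l\<in>UNIV. M$k$l * R x y k l)
       = (\<Sum>k\<in>UNIV. \<Sum>l\<in>UNIV. M$k$l * R k y x l) - (\<Sum>k\<in>UNIV. \<Sum>l\<in>UNIV. M$k$l * R k x y l)"
      by (simp add: right_diff_distrib sum_subtractf)
    then show ?thesis by (simp add: RicE)
  qed
  have P1': "(\<Sum>i\<in>UNIV. \<Sum>k\<in>UNIV. M$i$k * R i x k y) = - RicStar g R x y" for x y
    by (simp add: RSE)
  have eqS: "4 * Ric g R x y - 2 * Ric g R y x - 2 * RicStar g R x y = 0" for x y
  proof -
    have "CC R (US M x y) = 0" using orth US_s[OF Msym] by blast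
    then show ?thesis unfolding CC_US P1' RicE[symmetric] e3 e4 e5 by linarith
  qed
  have eqA: "Ric g R x y + Ric g R y x + RicStar g R x y + RicStar g R y x = 0" for x y
  proof -
    have "CC R (UA M x y) = 0" using orth UA_a[OF Msym] by blast
    then show ?thesis unfolding CC_UA P1' RicE[symmetric] e3 e4 by linarith
  qed
  have sk: "Ric g R x y = - Ric g R y x" for x y
    using eqS[of x y] eqS[of y x] eqA[of x y] by linarith
  show ?thesis
  proof (intro conjI allI)
    fix x y
    show "Ric g R x y = - Ric g R y x" by (rule sk)
    show "3 * Ric g R x y = RicStar g R x y"
      using eqS[of x y] sk[of x y] by linarith
  qed
qed

end
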